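(* Let $\kappa\in(0,1)$ and define, for $\varepsilon\in(0,1)$, $$f_\kappa(\varepsilon)=\bigl(1-\kappa\, Q^{-1}(\varepsilon)\bigr)(1-\varepsilon).$$ Then $f_\kappa$ has a unique maximizer $\varepsilon_g^{\star}=\varepsilon_g^\star(\kappa)\in(0,1)$, and $\varepsilon_g^{\star}$ is the unique solution in $(0,1)$ of the fixed point equation $$\Bigl(Q^{-1}(\varepsilon)-(1-\varepsilon)\,\bigl(Q^{-1}\bigr)'(\varepsilon)\Bigr)^{-1}=\kappa,\qquad\text{i.e.}\qquad \Bigl(Q^{-1}(\varepsilon)+(1-\varepsilon)\sqrt{2\pi}\,e^{(Q^{-1}(\varepsilon))^2/2}\Bigr)^{-1}=\kappa .$$ Furthermore, $\varepsilon_g^{\star}(\kappa)$ is increasing in $\kappa$.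
   Context: $Q(x)=\int_x^\infty \frac{1}{\sqrt{2\pi}}e^{-t^2/2}\,dt$ is the tail probability of a standard normal random variable, and $Q^{-1}:(0,1)\to\mathbb{R}$ is its inverse function. In the paper's setting, $f_\kappa$ is (up to the positive factor $\mu$) a Gaussian approximation of the goodput $R_\varepsilon(1-\varepsilon)$ as a function of the packet error probability $\varepsilon$, where $\kappa=\sigma(\mathsf{SNR})/(\mu(\mathsf{SNR})\sqrt{L})$ with $\mu,\sigma^2$ the mean and variance of $\log_2(1+\mathsf{SNR}|h|^2)$, $h\sim\mathcal{CN}(0,1)$, and $L$ the number of independent fading blocks per codeword. *)

theory Defs
  imports "HOL-Analysis.Analysis"
begin

definition Qfun :: "real \<Rightarrow> real" where
  "Qfun x = (LBINT t:{x..}. (1 / sqrt (2 * pi)) * exp (- (t\<^sup>2) / 2))"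

definition Qinv :: "real \<Rightarrow> real" where
  "Qinv e = (THE x. Qfun x = e)"

definition f_kappa :: "real \<Rightarrow> real \<Rightarrow> real" where
  "f_kappa \<kappa> e = (1 - \<kappa> * Qinv e) * (1 - e)"

definition is_maximizer :: "real \<Rightarrow> real \<Rightarrow> bool" where
  "is_maximizer \<kappa> e \<longleftrightarrow> e \<in> {0<..<1} \<and> (\<forall>e'\<in>{0<..<1}. f_kappa \<kappa> e' \<le> f_kappa \<kappa> e)"

definition eps_g :: "real \<Rightarrow> real" where
  "eps_g \<kappa> = (THE e. is_maximizer \<kappa> e)"

end

theory Submission imports Defs "HOL-Probability.Probability" "HOL-Real_Asymp.Real_Asymp"
begin

abbreviation "phi \<equiv> std_normal_density"

lemma phi_pos: "phi x > 0" by (rule normal_density_pos) simp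

lemma phi_cont: "continuous_on S phi"
  unfolding std_normal_density_def by (intro continuous_intros) auto

lemma phi_isCont: "isCont phi x"
  unfolding std_normal_density_def by (intro continuous_intros) auto

lemma Q_eq: "Qfun x = (LINT t:{x..}|lborel. phi t)"
  unfolding Qfun_def std_normal_density_def ..

lemma phi_si: "A \<in> sets borel \<Longrightarrow> set_integrable lborel A phi"
  unfolding set_integrable_def by (rule integrable_mult_indicator) auto

lemma Q_split: assumes "a \<le> b" shows "Qfun a = integral {a..b} phi + Qfun b"
proof -
  have u: "{a..} = {a..b} \<union> {b<..}" using assms by auto
  have "Qfun a = (LINT t:{a..b}|lborel. phi t) + (LINT t:{b<..}|lborel. phi t)"
    unfolding Q_eq u by (rule set_integral_Un) (auto intro: phi_si)
  moreover have "(LINT t:{a..b}|lborel. phi t) = integral {a..b} phi"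
    by (rule set_borel_integral_eq_integral) (auto intro: phi_si)
  moreover have "(LINT t:{b<..}|lborel. phi t) = Qfun b"
    unfolding Q_eq
    apply (rule set_integral_cong_set)
    using phi_si[of "{b..}"] phi_si[of "{b<..}"]
      apply (auto simp: set_integrable_def set_borel_measurable_def)
    using AE_lborel_singleton[of b] by eventually_elim auto
  ultimately show ?thesis by simp
qed


lemma Q_deriv: "(Qfun has_real_derivative - phi x) (at x)"
proof -
  have i: "((\<lambda>y. integral {x-1..y} phi) has_real_derivative phi x) (at x within {x-1..x+1})"
    by (rule integral_has_real_derivative[OF phi_cont]) auto
  have d: "((\<lambda>y. Qfun (x-1) - integral {x-1..y} phi) has_real_derivative - phi x) (at x within {x-1..x+1})"
    using DERIV_diff[OF DERIV_const i, of "Qfun (x-1)"] by simp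
  have "interior {x-1..x+1} = {x-1<..<x+1}" by simp
  then have "x \<in> interior {x-1..x+1}" by simp
  from d[unfolded at_within_interior[OF this]]
  have d2: "((\<lambda>y. Qfun (x-1) - integral {x-1..y} phi) has_real_derivative - phi x) (at x)" .
  show ?thesis
  proof (rule has_field_derivative_transform_within_open[OF d2, of "{x-1<..}"])
    fix y :: real assume "y \<in> {x-1<..}"
    then show "Qfun (x-1) - integral {x-1..y} phi = Qfun y" using Q_split[of "x-1" y] by auto
  qed auto
qed

lemma Q_cont: "isCont Qfun x"
  using Q_deriv DERIV_isCont by blast

lemma Q_contr: "continuous_on S Qfun"
  using Q_cont by (simp add: continuous_at_imp_continuous_on)

lemma Q_top: "(Qfun \<longlongrightarrow> 0) at_top"
proof -
  have "((\<lambda>x. integral\<^sup>L lborel (\<lambda>t. indicator {x..} t *\<^sub>R phi t)) \<longlongrightarrow> integral\<^sup>L lborel (\<lambda>t::real. 0::real)) at_top"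
  proof (rule integral_dominated_convergence_at_top[where w=phi and s="\<lambda>x t. indicator {x..} t *\<^sub>R phi t" and f="\<lambda>t. 0"])
    show "AE t in lborel. ((\<lambda>x. indicator {x..} t *\<^sub>R phi t) \<longlongrightarrow> 0) at_top"
    proof (rule AE_I2)
      fix t :: real
      have "eventually (\<lambda>x. indicator {x..} t *\<^sub>R phi t = 0) at_top"
        using eventually_gt_at_top[of t] by eventually_elim auto
      then show "((\<lambda>x. indicator {x..} t *\<^sub>R phi t) \<longlongrightarrow> 0) at_top"
        by (rule tendsto_eventually)
    qed
    show "\<forall>\<^sub>F i in at_top. AE x in lborel. norm (indicator {i..} x *\<^sub>R phi x) \<le> phi x"
      by (auto simp: indicator_def)
  qed auto
  then show ?thesis unfolding Q_eq set_lebesgue_integral_def by simp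
qed

lemma Q_bot: "(Qfun \<longlongrightarrow> 1) at_bot"
proof -
  have "((\<lambda>x. integral\<^sup>L lborel (\<lambda>t. indicator {-x..} t *\<^sub>R phi t)) \<longlongrightarrow> integral\<^sup>L lborel phi) at_top"
  proof (rule integral_dominated_convergence_at_top[where w=phi])
    show "AE t in lborel. ((\<lambda>x. indicator {-x..} t *\<^sub>R phi t) \<longlongrightarrow> phi t) at_top"
    proof (rule AE_I2)
      fix t :: real
      have "eventually (\<lambda>x. indicator {-x..} t *\<^sub>R phi t = phi t) at_top"
        using eventually_gt_at_top[of "-t"] by eventually_elim auto
      then show "((\<lambda>x. indicator {-x..} t *\<^sub>R phi t) \<longlongrightarrow> phi t) at_top"
        by (rule tendsto_eventually)
    qed
    show "\<forall>\<^sub>F i in at_top. AE x in lborel. norm (indicator {-i..} x *\<^sub>R phi x) \<le> phi x"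
      by (auto simp: indicator_def)
  qed auto
  then have "((\<lambda>x. Qfun (-x)) \<longlongrightarrow> 1) at_top" unfolding Q_eq set_lebesgue_integral_def by simp
  then show ?thesis unfolding filterlim_at_bot_mirror by simp
qed

lemma Q_strict: "a < b \<Longrightarrow> Qfun b < Qfun a"
  by (rule DERIV_neg_imp_decreasing[of a b Qfun]) (use Q_deriv phi_pos in \<open>auto intro!: exI[of _ "- phi _"]\<close>)

lemma Q_mono: "a \<le> b \<Longrightarrow> Qfun b \<le> Qfun a"
  using Q_strict[of a b] by (cases "a = b") auto

lemma Q_ge0: "0 \<le> Qfun x"
proof (rule tendsto_le[OF _ tendsto_const Q_top])
  show "\<forall>\<^sub>F y in at_top. Qfun y \<le> Qfun x"
    using eventually_ge_at_top[of x] by eventually_elim (rule Q_mono)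
qed simp

lemma Q_le1: "Qfun x \<le> 1"
proof (rule tendsto_le[OF _ Q_bot tendsto_const])
  show "\<forall>\<^sub>F y in at_bot. Qfun x \<le> Qfun y"
    using eventually_le_at_bot[of x] by eventually_elim (rule Q_mono)
qed simp

lemma Q_gt0: "0 < Qfun x"
  using Q_strict[of x "x+1"] Q_ge0[of "x+1"] by simp

lemma Q_lt1: "Qfun x < 1"
  using Q_strict[of "x-1" x] Q_le1[of "x-1"] by simp

lemma Q_surj: assumes "0 < e" "e < 1" shows "\<exists>x. Qfun x = e"
proof -
  have "\<forall>\<^sub>F x in at_top. Qfun x < e" using order_tendstoD(2)[OF Q_top assms(1)] .
  then obtain b where b: "\<And>x. x \<ge> b \<Longrightarrow> Qfun x < e" by (auto simp: eventually_at_top_linorder)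
  have "\<forall>\<^sub>F x in at_bot. e < Qfun x" using order_tendstoD(1)[OF Q_bot assms(2)] .
  then obtain a where a: "\<And>x. x \<le> a \<Longrightarrow> e < Qfun x" by (auto simp: eventually_at_bot_linorder)
  let ?a = "min a (b - 1)"
  have "\<exists>x\<ge>?a. x \<le> b \<and> Qfun x = e"
    by (rule IVT2) (use a b Q_cont in \<open>auto intro: less_imp_le\<close>)
  then show ?thesis by blast
qed

lemma Q_inj: "Qfun x = Qfun y \<Longrightarrow> x = y"
  using Q_strict[of x y] Q_strict[of y x] by (cases x y rule: linorder_cases) auto

lemma Qinv_Q[simp]: "Qinv (Qfun x) = x"
  unfolding Qinv_def by (rule the_equality) (auto intro: Q_inj)

lemma Q_Qinv: assumes "0 < e" "e < 1" shows "Qfun (Qinv e) = e"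
proof -
  obtain x where "Qfun x = e" using Q_surj[OF assms] by blast
  then show ?thesis by auto
qed

lemma Qinv_deriv: assumes "0 < e" "e < 1"
  shows "DERIV Qinv e :> - 1 / phi (Qinv e)"
proof -
  have c: "isCont Qinv (Qfun (Qinv e))"
    by (rule isCont_inverse_function2[of "Qinv e - 1" _ "Qinv e + 1"]) (auto intro: Q_cont)
  have "DERIV Qinv e :> inverse (- phi (Qinv e))"
    by (rule DERIV_inverse_function[where f=Qfun and g=Qinv and a=0 and b=1])
       (use assms Q_deriv phi_pos[of "Qinv e"] c Q_Qinv in auto)
  then show ?thesis by (simp add: divide_inverse)
qed

lemma deriv_Qinv: "0 < e \<Longrightarrow> e < 1 \<Longrightarrow> deriv Qinv e = - 1 / phi (Qinv e)"
  using Qinv_deriv DERIV_imp_deriv by blast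

lemma phi_deriv: "DERIV phi x :> - x * phi x"
proof -
  have "DERIV (\<lambda>x. (1 / sqrt (2 * pi)) * exp (- x\<^sup>2 / 2)) x :> (1 / sqrt (2 * pi)) * (exp (- x\<^sup>2 / 2) * (- (2 * x) / 2))"
    by (intro derivative_eq_intros) auto
  then show ?thesis unfolding std_normal_density_def by (simp add: algebra_simps)
qed

definition nn :: "real \<Rightarrow> real" where "nn x = phi x / (- x) - (1 - Qfun x)"

lemma nn_deriv: "x < 0 \<Longrightarrow> DERIV nn x :> phi x / x\<^sup>2"
proof -
  assume x: "x < 0"
  have "DERIV nn x :> ((- x * phi x) * (- x) - phi x * (- 1)) / ((- x) * (- x)) - (0 - (- phi x))"
    unfolding nn_def[abs_def]
    by (rule DERIV_diff[OF DERIV_divide[OF phi_deriv DERIV_minus[OF DERIV_ident]] DERIV_diff[OF DERIV_const Q_deriv]]) (use x in simp)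
  moreover have "((- x * phi x) * (- x) - phi x * (- 1)) / ((- x) * (- x)) - (0 - (- phi x)) = phi x / x\<^sup>2"
    using x by (simp add: field_simps power2_eq_square)
  ultimately show ?thesis by simp
qed

lemma nn_bot: "(nn \<longlongrightarrow> 0) at_bot"
proof -
  have 1: "((\<lambda>x. phi x / (- x)) \<longlongrightarrow> 0) at_bot"
    unfolding std_normal_density_def by real_asymp
  have 2: "((\<lambda>x. 1 - Qfun x) \<longlongrightarrow> 0) at_bot"
    using tendsto_diff[OF tendsto_const Q_bot, of 1] by simp
  show ?thesis unfolding nn_def[abs_def] using tendsto_diff[OF 1 2] by simp
qed

lemma nn_nonneg: assumes "x < 0" shows "0 \<le> nn x"
proof (rule tendsto_le[OF _ tendsto_const nn_bot])
  show "\<forall>\<^sub>F y in at_bot. nn y \<le> nn x"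
  proof (rule eventually_mono[OF eventually_gt_at_bot[of x]])
    fix y assume "y < x"
    show "nn y \<le> nn x"
    proof (rule less_imp_le, rule DERIV_pos_imp_increasing_open[OF \<open>y < x\<close>])
      fix z assume "y < z" "z < x"
      then show "\<exists>d. DERIV nn z :> d \<and> 0 < d" using assms nn_deriv[of z] phi_pos[of z]
        by (intro exI[of _ "phi z / z\<^sup>2"]) auto
    next
      have "\<forall>z\<in>{y..x}. isCont nn z"
        using assms nn_deriv DERIV_isCont by (metis atLeastAtMost_iff le_less_trans)
      then show "continuous_on {y..x} nn" by (simp add: continuous_at_imp_continuous_on)
    qed
  qed
qed simp

lemma mills: "x < 0 \<Longrightarrow> x * (1 - Qfun x) / phi x \<ge> -1"
  using nn_nonneg[of x] phi_pos[of x] unfolding nn_def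
  by (simp add: field_simps)

definition hh :: "real \<Rightarrow> real" where "hh x = x + (1 - Qfun x) / phi x"

lemma hh_deriv: "DERIV hh x :> 2 + x * (1 - Qfun x) / phi x"
proof -
  have "DERIV hh x :> 1 + ((0 - (- phi x)) * phi x - (1 - Qfun x) * (- x * phi x)) / (phi x * phi x)"
    unfolding hh_def[abs_def]
    by (rule DERIV_add[OF DERIV_ident DERIV_divide[OF DERIV_diff[OF DERIV_const Q_deriv] phi_deriv]]) (use phi_pos[of x] in simp)
  moreover have "1 + ((0 - (- phi x)) * phi x - (1 - Qfun x) * (- x * phi x)) / (phi x * phi x) = 2 + x * (1 - Qfun x) / phi x"
    using phi_pos[of x] by (simp add: field_simps power2_eq_square)
  ultimately show ?thesis by simp
qed

lemma hh_deriv_pos: "2 + x * (1 - Qfun x) / phi x > 0"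
proof (cases "x < 0")
  case True then show ?thesis using mills[of x] by simp
next
  case False
  have "0 \<le> x * (1 - Qfun x) / phi x"
    using False Q_lt1[of x] phi_pos[of x] by (intro divide_nonneg_pos mult_nonneg_nonneg) auto
  then show ?thesis by linarith
qed

lemma hh_cont: "isCont hh x"
  using hh_deriv DERIV_isCont by blast

lemma hh_strict: "a < b \<Longrightarrow> hh a < hh b"
  by (rule DERIV_pos_imp_increasing[of a b hh]) (use hh_deriv hh_deriv_pos in blast)+

lemma hh_lt_iff: "hh a < hh b \<longleftrightarrow> a < b"
  using hh_strict[of a b] hh_strict[of b a] by (cases a b rule: linorder_cases) auto

lemma hh_eq_iff: "hh a = hh b \<longleftrightarrow> a = b"
  using hh_strict[of a b] hh_strict[of b a] by (cases a b rule: linorder_cases) auto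

lemma hh_m1: "hh (-1) \<le> 0"
  using mills[of "-1"] phi_pos[of "-1"] unfolding hh_def by (simp add: field_simps)

lemma hh_gt: "hh x > x"
  using Q_lt1[of x] phi_pos[of x] unfolding hh_def by simp

lemma hh_surj: assumes "c > 0" shows "\<exists>x. hh x = c"
proof -
  have "\<exists>x\<ge>-1. x \<le> c \<and> hh x = c"
    by (rule IVT) (use assms hh_m1 hh_gt[of c] hh_cont in \<open>auto intro: less_imp_le\<close>)
  then show ?thesis by blast
qed

definition gg :: "real \<Rightarrow> real \<Rightarrow> real" where "gg k x = (1 - k * x) * (1 - Qfun x)"

lemma gg_deriv: assumes k: "k > 0" shows "DERIV (gg k) x :> k * phi x * (1 / k - hh x)"
proof -
  have "DERIV (gg k) x :> (0 - k * 1) * (1 - Qfun x) + (0 - - phi x) * (1 - k * x)"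
    unfolding gg_def[abs_def]
    by (rule DERIV_mult[OF DERIV_diff[OF DERIV_const DERIV_cmult[OF DERIV_ident]] DERIV_diff[OF DERIV_const Q_deriv]])
  moreover have "(0 - k * 1) * (1 - Qfun x) + (0 - - phi x) * (1 - k * x) = k * phi x * (1 / k - hh x)"
    using k phi_pos[of x] unfolding hh_def by (simp add: field_simps)
  ultimately show ?thesis by simp
qed

lemma gg_cont: "k > 0 \<Longrightarrow> continuous_on S (gg k)"
  by (intro continuous_at_imp_continuous_on ballI DERIV_isCont[OF gg_deriv])

lemma gg_max: assumes k: "k > 0" and X: "hh X = 1 / k" and x: "x \<noteq> X"
  shows "gg k x < gg k X"
proof (cases "x < X")
  case True
  show ?thesis
  proof (rule DERIV_pos_imp_increasing_open[OF True])
    fix z assume "x < z" "z < X"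
    then have "hh z < 1 / k" using X hh_strict[of z X] by simp
    then show "\<exists>d. DERIV (gg k) z :> d \<and> 0 < d" using gg_deriv[OF k, of z] k phi_pos[of z]
      by (intro exI[of _ "k * phi z * (1 / k - hh z)"]) auto
  qed (rule gg_cont[OF k])
next
  case False
  then have "X < x" using x by simp
  then show ?thesis
  proof (rule DERIV_neg_imp_decreasing_open)
    fix z assume "X < z" "z < x"
    then have "hh z > 1 / k" using X hh_strict[of X z] by simp
    then show "\<exists>d. DERIV (gg k) z :> d \<and> d < 0" using gg_deriv[OF k, of z] k phi_pos[of z]
      by (intro exI[of _ "k * phi z * (1 / k - hh z)"]) (auto simp: mult_pos_neg)
  qed (rule gg_cont[OF k])
qed

lemma f_gg: "0 < e \<Longrightarrow> e < 1 \<Longrightarrow> f_kappa k e = gg k (Qinv e)"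
  unfolding f_kappa_def gg_def using Q_Qinv by simp

definition xs :: "real \<Rightarrow> real" where "xs k = (THE x. hh x = 1 / k)"

lemma xs: "k > 0 \<Longrightarrow> hh (xs k) = 1 / k"
proof -
  assume k: "k > 0"
  obtain x where x: "hh x = 1 / k" using hh_surj[of "1/k"] k by auto
  have "xs k = x" unfolding xs_def by (rule the_equality) (use x hh_eq_iff in metis)+
  then show ?thesis using x by simp
qed

lemma main_k: assumes k: "0 < k"
  shows "(\<exists>!e. is_maximizer k e) \<and> eps_g k = Qfun (xs k)"
proof -
  let ?X = "xs k" let ?E = "Qfun ?X"
  have X: "hh ?X = 1 / k" using xs[OF k] .
  have E: "0 < ?E" "?E < 1" using Q_gt0 Q_lt1 by auto
  have mx: "is_maximizer k ?E"
    unfolding is_maximizer_def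
  proof (intro conjI ballI)
    show "?E \<in> {0<..<1}" using E by auto
    fix e' :: real assume e': "e' \<in> {0<..<1}"
    have "gg k (Qinv e') \<le> gg k ?X" using gg_max[OF k X, of "Qinv e'"] by (cases "Qinv e' = ?X") auto
    then show "f_kappa k e' \<le> f_kappa k ?E" using f_gg e' E by auto
  qed
  have un: "e = ?E" if "is_maximizer k e" for e
  proof -
    from that have e: "0 < e" "e < 1" and le: "f_kappa k ?E \<le> f_kappa k e"
      unfolding is_maximizer_def using E by auto
    then have "gg k ?X \<le> gg k (Qinv e)" using f_gg E by auto
    then have "Qinv e = ?X" using gg_max[OF k X, of "Qinv e"] by (cases "Qinv e = ?X") auto
    then show ?thesis using Q_Qinv[OF e] by simp
  qed
  have ex: "\<exists>!e. is_maximizer k e" using mx un by blast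
  moreover have "eps_g k = ?E" unfolding eps_g_def by (rule the1_equality[OF ex mx])
  ultimately show ?thesis by (rule conjI)
qed

lemma inv_phi: "1 / phi x = sqrt (2 * pi) * exp (x\<^sup>2 / 2)"
proof -
  have "exp (- x\<^sup>2 / 2) * exp (x\<^sup>2 / 2) = 1"
    by (simp add: exp_add[symmetric])
  then show ?thesis unfolding std_normal_density_def by (simp add: field_simps)
qed

lemma recip_iff: "k \<noteq> 0 \<Longrightarrow> (1 / (a::real) = k) = (a = 1 / k)"
  by (cases "a = 0") (auto simp: field_simps)

lemma fp_iff: assumes k: "0 < k" and e: "0 < e" "e < 1"
  shows "(1 / hh (Qinv e) = k) = (e = eps_g k)"
proof -
  have ek: "eps_g k = Qfun (xs k)" using main_k[OF k] by simp
  have "(1 / hh (Qinv e) = k) = (hh (Qinv e) = hh (xs k))" using recip_iff[of k] k xs[OF k] by simp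
  also have "\<dots> = (Qinv e = xs k)" by (rule hh_eq_iff)
  also have "\<dots> = (e = Qfun (xs k))" using Q_Qinv[OF e] by auto
  finally show ?thesis using ek by simp
qed

theorem proposition1:
  shows "(\<forall>\<kappa>\<in>{0<..<1::real}.
           (\<exists>!e. is_maximizer \<kappa> e)
         \<and> eps_g \<kappa> \<in> {0<..<1}
         \<and> (\<forall>e\<in>{0<..<1::real}.
               1 / (Qinv e - (1 - e) * deriv Qinv e) = \<kappa> \<longleftrightarrow> e = eps_g \<kappa>)
         \<and> (\<forall>e\<in>{0<..<1::real}.
               1 / (Qinv e + (1 - e) * sqrt (2 * pi) * exp ((Qinv e)\<^sup>2 / 2)) = \<kappa>
                 \<longleftrightarrow> e = eps_g \<kappa>))
         \<and> strict_mono_on {0<..<1::real} eps_g"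
proof (intro conjI ballI)
  fix k :: real assume "k \<in> {0<..<1}"
  then have k: "0 < k" by simp
  show "\<exists>!e. is_maximizer k e" using main_k[OF k] by simp
  show "eps_g k \<in> {0<..<1}" using main_k[OF k] Q_gt0 Q_lt1 by simp
  fix e :: real assume "e \<in> {0<..<1}"
  then have e: "0 < e" "e < 1" by auto
  have h1: "Qinv e - (1 - e) * deriv Qinv e = hh (Qinv e)"
    unfolding deriv_Qinv[OF e] hh_def using Q_Qinv[OF e] by simp
  show "(1 / (Qinv e - (1 - e) * deriv Qinv e) = k) = (e = eps_g k)"
    unfolding h1 by (rule fp_iff[OF k e])
next
  fix k :: real assume "k \<in> {0<..<1}"
  then have k: "0 < k" by simp
  fix e :: real assume "e \<in> {0<..<1}"
  then have e: "0 < e" "e < 1" by auto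
  have "(1 - e) * sqrt (2 * pi) * exp ((Qinv e)\<^sup>2 / 2) = (1 - Qfun (Qinv e)) * (1 / phi (Qinv e))"
    unfolding inv_phi using Q_Qinv[OF e] by simp
  then have h2: "Qinv e + (1 - e) * sqrt (2 * pi) * exp ((Qinv e)\<^sup>2 / 2) = hh (Qinv e)"
    unfolding hh_def by simp
  show "(1 / (Qinv e + (1 - e) * sqrt (2 * pi) * exp ((Qinv e)\<^sup>2 / 2)) = k) = (e = eps_g k)"
    unfolding h2 by (rule fp_iff[OF k e])
next
  show "strict_mono_on {0<..<1::real} eps_g"
  proof (rule strict_mono_onI)
    fix r s :: real assume r: "r \<in> {0<..<1}" and s: "s \<in> {0<..<1}" and rs: "r < s"
    have "hh (xs s) < hh (xs r)" using xs[of r] xs[of s] r s rs by (simp add: frac_less2)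
    then have "xs s < xs r" using hh_lt_iff by simp
    then have "Qfun (xs r) < Qfun (xs s)" by (rule Q_strict)
    then show "eps_g r < eps_g s" using main_k[of r] main_k[of s] r s by simp
  qed
qed

end
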